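(* Let $\mathfrak v_r$ be a $C(r)$-module and let $\mathfrak v_m$ be a $C(m)$-module with $m\equiv 0\pmod 4$ (both with compatible inner products). Then $\mathfrak v_m\otimes\mathfrak v_r$ is a $C(m+r)$-module with Clifford action $$J_{(z,w)}=J_z\otimes \mathrm{Id}+K_m\otimes J_w,\qquad (z,w)\in\mathbb R^m\times\mathbb R^r=\mathbb R^{m+r},$$ and the corresponding Lie algebra of Heisenberg type $(\mathfrak v_m\otimes\mathfrak v_r)\oplus(\mathbb R^m\times\mathbb R^r)$ has bracket $$[x\otimes u,\,y\otimes v]=\big(\langle u,v\rangle[x,y],\ \langle K_mx,y\rangle[u,v]\big),\qquad x,y\in\mathfrak v_m,\ u,v\in\mathfrak v_r .$$
   Context: $C(k)$ is the real Clifford algebra of $\mathbb R^k$ with relations $z^2=-\langle z,z\rangle 1$; a $C(k)$-module $\mathfrak w$ comes with an inner product for which each $J_z$ ($z\in\mathbb R^k$, acting on $\mathfrak w$) is skew-symmetric. The associated Lie algebra of Heisenberg type is $\mathfrak w\oplus\mathbb R^k$ with $\mathbb R^k$ central and bracket on $\mathfrak w$ given by $\langle z,[u,v]\rangle=\langle J_zu,v\rangle$. For a fixed orthonormal basis $z_1,\dots,z_m$ of $\mathbb R^m$, $K_m=J_{z_1}\cdots J_{z_m}$. The inner product on $\mathfrak v_m\otimes\mathfrak v_r$ is the tensor product inner product. *)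

theory Defs
  imports "HOL-Analysis.Analysis"
begin

text \<open>A C(k)-module structure on a real inner product space 'v (with compatible
inner product), where R^k is modelled by the euclidean space 'z:
z \<mapsto> J z is linear, each J z is linear and skew-symmetric, and J z \<circ> J z = - |z|^2 Id.\<close>
definition clifford_module :: "('z::real_inner \<Rightarrow> 'v::real_inner \<Rightarrow> 'v) \<Rightarrow> bool" where
  "clifford_module J \<longleftrightarrow>
     (\<forall>u. linear (\<lambda>z. J z u)) \<and>
     (\<forall>z. linear (J z)) \<and>
     (\<forall>z u v. inner (J z u) v = - inner u (J z v)) \<and>
     (\<forall>z u. J z (J z u) = - (inner z z) *\<^sub>R u)"

text \<open>The bracket of the associated Lie algebra of Heisenberg type, restricted to w:
[u,v] is the element of R^k with <z,[u,v]> = <J z u, v> for all z.\<close>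
definition htype_bracket :: "('z::real_inner \<Rightarrow> 'v::real_inner \<Rightarrow> 'v) \<Rightarrow> 'v \<Rightarrow> 'v \<Rightarrow> 'z" where
  "htype_bracket J u v = (THE c. \<forall>z. inner z c = inner (J z u) v)"

definition clifford_K :: "('z \<Rightarrow> 'v \<Rightarrow> 'v) \<Rightarrow> (nat \<Rightarrow> 'z) \<Rightarrow> nat \<Rightarrow> 'v \<Rightarrow> 'v" where
  "clifford_K J zs m = foldr (\<lambda>i f. J (zs i) \<circ> f) [0..<m] id"

definition orthonormal_list :: "(nat \<Rightarrow> 'z::real_inner) \<Rightarrow> nat \<Rightarrow> bool" where
  "orthonormal_list zs m \<longleftrightarrow> (\<forall>i<m. \<forall>j<m. inner (zs i) (zs j) = (if i = j then 1 else 0))"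

text \<open>Tensor product R^a \<otimes> R^b modelled as real^('a \<times> 'b); the standard inner
product there is the tensor product inner product.\<close>
definition tensor_vec :: "real^'a \<Rightarrow> real^'b \<Rightarrow> real^('a \<times> 'b)" where
  "tensor_vec x u = (\<chi> p. x $ fst p * u $ snd p)"

definition tensor_map ::
  "(real^'a \<Rightarrow> real^'a) \<Rightarrow> (real^'b \<Rightarrow> real^'b) \<Rightarrow> real^('a \<times> 'b) \<Rightarrow> real^('a \<times> 'b)" where
  "tensor_map f g X = (\<chi> p. \<Sum>q\<in>UNIV.
      f (axis (fst q) 1) $ fst p * g (axis (snd q) 1) $ snd p * X $ q)"

end

theory Submission
  imports Defs
begin

lemma cm_linz: "clifford_module J \<Longrightarrow> linear (\<lambda>z. J z u)"
  by (simp add: clifford_module_def)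
lemma cm_lin: "clifford_module J \<Longrightarrow> linear (J z)"
  by (simp add: clifford_module_def)
lemma cm_skew: "clifford_module J \<Longrightarrow> inner (J z u) v = - inner u (J z v)"
  by (simp add: clifford_module_def)
lemma cm_sq: "clifford_module J \<Longrightarrow> J z (J z u) = - (inner z z) *\<^sub>R u"
  by (simp add: clifford_module_def)

lemma cm_addz: "clifford_module J \<Longrightarrow> J (a + b) x = J a x + J b x"
  using linear_add[OF cm_linz] by metis
lemma cm_add: "clifford_module J \<Longrightarrow> J z (x + y) = J z x + J z y"
  using linear_add[OF cm_lin] by metis
lemma cm_scale: "clifford_module J \<Longrightarrow> J z (c *\<^sub>R x) = c *\<^sub>R J z x"
  using linear_scale[OF cm_lin] by metis
lemma cm_neg: "clifford_module J \<Longrightarrow> J z (- x) = - J z x"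
  using linear_neg[OF cm_lin] by metis

lemma cm_polar:
  assumes cm: "clifford_module J"
  shows "J a (J b x) + J b (J a x) = - (2 * inner a b) *\<^sub>R x"
proof -
  have "J (a+b) (J (a+b) x) = J a (J a x) + J a (J b x) + J b (J a x) + J b (J b x)"
    by (simp add: cm_addz[OF cm] cm_add[OF cm])
  moreover have "J (a+b) (J (a+b) x) = - (inner (a+b) (a+b)) *\<^sub>R x" by (rule cm_sq[OF cm])
  ultimately show ?thesis
    by (simp add: cm_sq[OF cm] inner_add_left inner_add_right inner_commute algebra_simps)
qed

fun cp :: "('z \<Rightarrow> 'v \<Rightarrow> 'v) \<Rightarrow> (nat \<Rightarrow> 'z) \<Rightarrow> nat list \<Rightarrow> 'v \<Rightarrow> 'v" where
  "cp J zs [] x = x"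
| "cp J zs (i # l) x = J (zs i) (cp J zs l x)"

lemma clifford_K_cp: "clifford_K J zs m = cp J zs [0..<m]"
proof -
  have "\<And>l. foldr (\<lambda>i f. J (zs i) \<circ> f) l id = cp J zs l"
  proof -
    fix l show "foldr (\<lambda>i f. J (zs i) \<circ> f) l id = cp J zs l"
      by (induction l) (auto simp: fun_eq_iff)
  qed
  then show ?thesis by (simp add: clifford_K_def)
qed

lemma cp_append: "cp J zs (l1 @ l2) x = cp J zs l1 (cp J zs l2 x)"
  by (induction l1) auto

lemma cp_linear: assumes cm: "clifford_module J" shows "linear (cp J zs l)"
proof (induction l)
  case Nil then show ?case by (simp add: linear_id[unfolded id_def])
next
  case (Cons i l)
  have "linear (J (zs i) \<circ> cp J zs l)" by (rule linear_compose[OF Cons cm_lin[OF cm]])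
  then show ?case by (simp add: o_def)
qed

lemma orth: "orthonormal_list zs m \<Longrightarrow> i < m \<Longrightarrow> j < m \<Longrightarrow> inner (zs i) (zs j) = (if i = j then 1 else 0)"
  by (simp add: orthonormal_list_def)

lemma cp_anti:
  assumes cm: "clifford_module J" and on: "orthonormal_list zs m" and jm: "j < m"
  shows "distinct l \<Longrightarrow> set l \<subseteq> {..<m} \<Longrightarrow>
     J (zs j) (cp J zs l x) = ((-1) ^ (length l + (if j \<in> set l then 1 else 0))) *\<^sub>R cp J zs l (J (zs j) x)"
proof (induction l arbitrary: x)
  case Nil then show ?case by simp
next
  case (Cons i l)
  have im: "i < m" using Cons.prems by auto
  have lin: "linear (cp J zs l)" by (rule cp_linear[OF cm])
  show ?case
  proof (cases "i = j")
    case True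
    then have jl: "j \<notin> set l" using Cons.prems by auto
    have 1: "inner (zs j) (zs j) = 1" using orth[OF on jm jm] by simp
    have "J (zs j) (cp J zs (i # l) x) = - cp J zs l x"
      using True by (simp add: cm_sq[OF cm] 1)
    moreover have "cp J zs (i # l) (J (zs j) x) = J (zs j) (cp J zs l (J (zs j) x))"
      using True by simp
    moreover have "J (zs j) (cp J zs l (J (zs j) x)) = ((-1) ^ length l) *\<^sub>R cp J zs l (J (zs j) (J (zs j) x))"
      using Cons.IH Cons.prems jl by auto
    moreover have "cp J zs l (J (zs j) (J (zs j) x)) = - cp J zs l x"
      using linear_neg[OF lin] by (simp add: cm_sq[OF cm] 1)
    ultimately show ?thesis using True jl
      by (simp add: cm_scale[OF cm] power_add)
  next
    case False
    have o: "inner (zs j) (zs i) = 0" using orth[OF on jm im] False by simp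
    have "J (zs j) (J (zs i) y) = - J (zs i) (J (zs j) y)" for y
      using cm_polar[OF cm, of "zs j" "zs i" y] o by (simp add: eq_neg_iff_add_eq_0)
    then have "J (zs j) (cp J zs (i # l) x) = - J (zs i) (J (zs j) (cp J zs l x))" by simp
    also have "\<dots> = - J (zs i) (((-1) ^ (length l + (if j \<in> set l then 1 else 0))) *\<^sub>R cp J zs l (J (zs j) x))"
      using Cons.IH Cons.prems by auto
    finally show ?thesis using False by (simp add: cm_scale[OF cm])
  qed
qed

lemma cp_adj:
  assumes cm: "clifford_module J"
  shows "inner (cp J zs l x) y = (-1) ^ length l * inner x (cp J zs (rev l) y)"
proof (induction l arbitrary: y)
  case Nil then show ?case by simp
next
  case (Cons i l)
  have "inner (cp J zs (i # l) x) y = - inner (cp J zs l x) (J (zs i) y)"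
    by (simp add: cm_skew[OF cm])
  also have "\<dots> = - ((-1) ^ length l * inner x (cp J zs (rev l) (J (zs i) y)))"
    using Cons.IH by simp
  finally show ?case by (simp add: cp_append)
qed

lemma tri: "Suc n * n div 2 = n * (n - 1) div 2 + n"
proof (cases n)
  case 0 then show ?thesis by simp
next
  case (Suc k)
  have "Suc n * n = n * (n - 1) + 2 * n" using Suc by (simp add: algebra_simps)
  then show ?thesis by simp
qed

lemma cp_rev:
  assumes cm: "clifford_module J" and on: "orthonormal_list zs m"
  shows "distinct l \<Longrightarrow> set l \<subseteq> {..<m} \<Longrightarrow>
     cp J zs (rev l) x = ((-1) ^ (length l * (length l - 1) div 2)) *\<^sub>R cp J zs l x"
proof (induction l arbitrary: x)
  case Nil then show ?case by simp
next
  case (Cons i l)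
  let ?n = "length l"
  have im: "i < m" and il: "i \<notin> set l" using Cons.prems by auto
  have lin: "linear (cp J zs l)" by (rule cp_linear[OF cm])
  have a: "cp J zs (i # l) x = ((-1) ^ ?n) *\<^sub>R cp J zs l (J (zs i) x)"
    using cp_anti[OF cm on im, of l x] Cons.prems il by simp
  have "cp J zs (rev (i # l)) x = cp J zs (rev l) (J (zs i) x)" by (simp add: cp_append)
  also have "\<dots> = ((-1) ^ (?n * (?n - 1) div 2)) *\<^sub>R cp J zs l (J (zs i) x)"
    using Cons.IH Cons.prems by auto
  also have "cp J zs l (J (zs i) x) = ((-1) ^ ?n) *\<^sub>R cp J zs (i # l) x"
    using a by simp
  finally have f: "cp J zs (rev (i # l)) x = ((-1) ^ (?n * (?n - 1) div 2) * (-1) ^ ?n) *\<^sub>R cp J zs (i # l) x"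
    by simp
  have e: "(-1::real)^(Suc ?n * ?n div 2) = (-1)^(?n*(?n-1) div 2) * (-1)^?n"
    by (simp only: tri power_add)
  show ?case using f e by simp
qed

lemma cp_isom:
  assumes cm: "clifford_module J" and on: "orthonormal_list zs m"
  shows "set l \<subseteq> {..<m} \<Longrightarrow> inner (cp J zs l x) (cp J zs l y) = inner x y"
proof (induction l)
  case Nil then show ?case by simp
next
  case (Cons i l)
  have im: "i < m" using Cons.prems by auto
  have 1: "inner (zs i) (zs i) = 1" using orth[OF on im im] by simp
  have "inner (cp J zs (i # l) x) (cp J zs (i # l) y) = inner (cp J zs l x) (cp J zs l y)"
    by (simp add: cm_skew[OF cm] cm_sq[OF cm] 1)
  then show ?case using Cons by simp
qed


lemma tv_add1: "tensor_vec (a + b) u = tensor_vec a u + tensor_vec b u"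
  by (simp add: tensor_vec_def vec_eq_iff algebra_simps)
lemma tv_add2: "tensor_vec x (u + v) = tensor_vec x u + tensor_vec x v"
  by (simp add: tensor_vec_def vec_eq_iff algebra_simps)
lemma tv_scale1: "tensor_vec (c *\<^sub>R a) u = c *\<^sub>R tensor_vec a u"
  by (simp add: tensor_vec_def vec_eq_iff algebra_simps)
lemma tv_scale2: "tensor_vec a (c *\<^sub>R u) = c *\<^sub>R tensor_vec a u"
  by (simp add: tensor_vec_def vec_eq_iff algebra_simps)
lemma tv_neg1: "tensor_vec (- a) u = - tensor_vec a u"
  by (simp add: tensor_vec_def vec_eq_iff algebra_simps)
lemma tv_neg2: "tensor_vec a (- u) = - tensor_vec a u"
  by (simp add: tensor_vec_def vec_eq_iff algebra_simps)
lemma tv_zero1: "tensor_vec 0 u = 0"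
  by (simp add: tensor_vec_def vec_eq_iff algebra_simps)

lemma tv_inner: "inner (tensor_vec x u) (tensor_vec y v) = inner x y * inner u v"
proof -
  have "inner (tensor_vec x u) (tensor_vec y v) = (\<Sum>p\<in>UNIV \<times> UNIV. x $ fst p * u $ snd p * (y $ fst p * v $ snd p))"
    by (simp add: inner_vec_def tensor_vec_def UNIV_Times_UNIV)
  also have "\<dots> = (\<Sum>i\<in>UNIV. \<Sum>j\<in>UNIV. x $ i * u $ j * (y $ i * v $ j))"
    by (simp add: sum.cartesian_product split_def)
  also have "\<dots> = (\<Sum>i\<in>UNIV. \<Sum>j\<in>UNIV. (x $ i * y $ i) * (u $ j * v $ j))"
    by (simp only: mult_ac)
  also have "\<dots> = (\<Sum>i\<in>UNIV. x $ i * y $ i) * (\<Sum>j\<in>UNIV. u $ j * v $ j)"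
    by (simp only: sum_product)
  also have "\<dots> = inner x y * inner u v"
    by (simp add: inner_vec_def)
  finally show ?thesis .
qed

lemma axis_tv: "axis p (1::real) = tensor_vec (axis (fst p) 1) (axis (snd p) 1)"
  by (cases p) (auto simp: tensor_vec_def vec_eq_iff axis_def)

lemma lin_expand:
  fixes f :: "real^'n \<Rightarrow> real^'k"
  assumes "linear f" shows "f x $ i = (\<Sum>j\<in>UNIV. x $ j * f (axis j 1) $ i)"
proof -
  have "f x = f (\<Sum>j\<in>UNIV. x $ j *\<^sub>R axis j 1)"
    using basis_expansion[of x] by (simp add: scalar_mult_eq_scaleR)
  also have "\<dots> = (\<Sum>j\<in>UNIV. x $ j *\<^sub>R f (axis j 1))"
    by (simp add: linear_sum[OF assms] linear_scale[OF assms])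
  finally show ?thesis by (simp add: sum_component)
qed

lemma tm_tv:
  assumes f: "linear f" and g: "linear g"
  shows "tensor_map f g (tensor_vec x u) = tensor_vec (f x) (g u)"
proof -
  have "tensor_map f g (tensor_vec x u) $ p = tensor_vec (f x) (g u) $ p" for p
  proof -
    have "tensor_map f g (tensor_vec x u) $ p
       = (\<Sum>q\<in>UNIV \<times> UNIV. f (axis (fst q) 1) $ fst p * g (axis (snd q) 1) $ snd p * (x $ fst q * u $ snd q))"
      by (simp add: tensor_map_def tensor_vec_def UNIV_Times_UNIV)
    also have "\<dots> = (\<Sum>i\<in>UNIV. \<Sum>j\<in>UNIV. f (axis i 1) $ fst p * g (axis j 1) $ snd p * (x $ i * u $ j))"
      by (simp add: sum.cartesian_product split_def)
    also have "\<dots> = (\<Sum>i\<in>UNIV. \<Sum>j\<in>UNIV. (x $ i * f (axis i 1) $ fst p) * (u $ j * g (axis j 1) $ snd p))"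
      by (simp only: mult_ac)
    also have "\<dots> = (\<Sum>i\<in>UNIV. x $ i * f (axis i 1) $ fst p) * (\<Sum>j\<in>UNIV. u $ j * g (axis j 1) $ snd p)"
      by (simp only: sum_product)
    also have "\<dots> = tensor_vec (f x) (g u) $ p"
      by (simp add: tensor_vec_def lin_expand[OF f, of x] lin_expand[OF g, of u])
    finally show ?thesis .
  qed
  then show ?thesis by (simp add: vec_eq_iff)
qed

lemma tm_linear: "linear (tensor_map f g)"
  by (rule linearI) (simp_all add: tensor_map_def vec_eq_iff algebra_simps sum.distrib sum_distrib_left)

lemma tm_addf: "tensor_map (\<lambda>a. f1 a + f2 a) g X = tensor_map f1 g X + tensor_map f2 g X"
  by (simp add: tensor_map_def vec_eq_iff algebra_simps sum.distrib)
lemma tm_scalef: "tensor_map (\<lambda>a. c *\<^sub>R f a) g X = c *\<^sub>R tensor_map f g X"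
  by (simp add: tensor_map_def vec_eq_iff algebra_simps sum_distrib_left)
lemma tm_addg: "tensor_map f (\<lambda>a. g1 a + g2 a) X = tensor_map f g1 X + tensor_map f g2 X"
  by (simp add: tensor_map_def vec_eq_iff algebra_simps sum.distrib)
lemma tm_scaleg: "tensor_map f (\<lambda>a. c *\<^sub>R g a) X = c *\<^sub>R tensor_map f g X"
  by (simp add: tensor_map_def vec_eq_iff algebra_simps sum_distrib_left)

lemma lin_eq_axis:
  fixes f g :: "real^'n \<Rightarrow> 'b::real_vector"
  assumes "linear f" "linear g" "\<And>p. f (axis p 1) = g (axis p 1)"
  shows "f = g"
  using assms by (intro linear_eq_stdbasis) (auto simp: Basis_vec_def)

lemma skew_axis:
  fixes T :: "real^'n \<Rightarrow> real^'n"
  assumes T: "linear T"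
    and h: "\<And>p q. inner (T (axis p 1)) (axis q 1) = - inner (axis p 1) (T (axis q 1))"
  shows "inner (T x) y = - inner x (T y)"
proof -
  have 1: "inner (T x) (axis q 1) = - inner x (T (axis q 1))" for x q
  proof -
    have "(\<lambda>x. inner (T x) (axis q 1)) = (\<lambda>x. - inner x (T (axis q 1)))"
      by (rule lin_eq_axis) (auto intro!: linearI simp: linear_add[OF T] linear_scale[OF T] inner_add_left h)
    then show ?thesis by metis
  qed
  have "(\<lambda>y. inner (T x) y) = (\<lambda>y. - inner x (T y))"
    by (rule lin_eq_axis) (auto intro!: linearI simp: linear_add[OF T] linear_scale[OF T] inner_add_right 1)
  then show ?thesis by metis
qed

lemma the_repr:
  fixes c :: "'z::real_inner"
  assumes "\<forall>z. inner z c = f z"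
  shows "(THE c. \<forall>z. inner z c = f z) = c"
proof (rule the_equality)
  fix c' assume a: "\<forall>z. inner z c' = f z"
  have "inner (c' - c) (c' - c) = 0" using a assms by (simp add: inner_diff)
  then show "c' = c" by simp
qed (use assms in auto)

lemma bracket_char:
  fixes J :: "'z::euclidean_space \<Rightarrow> 'v::real_inner \<Rightarrow> 'v"
  assumes cm: "clifford_module J"
  shows "inner z (htype_bracket J u v) = inner (J z u) v"
proof -
  let ?c = "\<Sum>b\<in>Basis. inner (J b u) v *\<^sub>R b"
  have lz: "linear (\<lambda>z. J z u)" using cm by (simp add: clifford_module_def)
  have r: "inner z ?c = inner (J z u) v" for z
  proof -
    have "J z u = J (\<Sum>b\<in>Basis. inner z b *\<^sub>R b) u" by (simp add: euclidean_representation)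
    also have "\<dots> = (\<Sum>b\<in>Basis. inner z b *\<^sub>R J b u)"
      using linear_sum[OF lz, of "\<lambda>b. inner z b *\<^sub>R b" Basis] linear_scale[OF lz] by simp
    finally show ?thesis by (simp add: inner_sum_right inner_sum_left mult.commute)
  qed
  then have "htype_bracket J u v = ?c" unfolding htype_bracket_def by (intro the_repr) auto
  then show ?thesis using r by simp
qed


lemma span_zs:
  fixes zs :: "nat \<Rightarrow> real^'m"
  assumes on: "orthonormal_list zs CARD('m)"
  shows "span (zs ` {..<CARD('m)}) = UNIV"
proof -
  let ?m = "CARD('m)" let ?S = "zs ` {..<?m}"
  have inj: "inj_on zs {..<?m}"
  proof (rule inj_onI)
    fix i j assume i: "i \<in> {..<?m}" and j: "j \<in> {..<?m}" and e: "zs i = zs j"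
    show "i = j"
    proof (rule ccontr)
      assume "i \<noteq> j"
      then have "inner (zs i) (zs j) = 0" using orth[OF on] i j by auto
      moreover have "inner (zs i) (zs i) = 1" using orth[OF on] i by auto
      ultimately show False using e by simp
    qed
  qed
  have po: "pairwise orthogonal ?S"
    unfolding pairwise_def orthogonal_def using orth[OF on] by auto
  have z: "0 \<notin> ?S"
  proof
    assume "0 \<in> ?S" then obtain i where "i < ?m" "zs i = 0" by auto
    then show False using orth[OF on, of i i] by auto
  qed
  have ind: "independent ?S" by (rule pairwise_orthogonal_independent[OF po z])
  have "dim ?S = card ?S" using dim_span_eq_card_independent[OF ind] by (simp add: dim_span)
  also have "\<dots> = ?m" using card_image[OF inj] by simp
  finally have "dim ?S = DIM(real^'m)" by simp
  then show ?thesis using dim_eq_full by blast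
qed

lemma div4: "(n::nat) = 4 * k \<Longrightarrow> n * (n - 1) div 2 = 2 * (k * (n - 1))"
proof -
  assume n: "n = 4 * k"
  have "n * (n - 1) = 2 * (2 * (k * (n - 1)))" unfolding n by (simp add: algebra_simps)
  then show ?thesis by (metis nonzero_mult_div_cancel_left zero_neq_numeral)
qed

context
  fixes Jm :: "real^'m \<Rightarrow> real^'a \<Rightarrow> real^'a"
    and zs :: "nat \<Rightarrow> real^'m"
  assumes cm: "clifford_module Jm"
    and m4: "CARD('m) mod 4 = 0"
    and on: "orthonormal_list zs CARD('m)"
begin

lemma K_cp: "clifford_K Jm zs CARD('m) = cp Jm zs [0..<CARD('m)]"
  by (rule clifford_K_cp)

lemma K_lin: "linear (clifford_K Jm zs CARD('m))"
  unfolding K_cp by (rule cp_linear[OF cm])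

lemma K_sym: "inner (clifford_K Jm zs CARD('m) x) y = inner x (clifford_K Jm zs CARD('m) y)"
proof -
  let ?m = "CARD('m)" let ?l = "[0..<?m]"
  obtain k where k: "?m = 4 * k" using m4 by auto
  have e1: "(-1::real) ^ ?m = 1" using k by (simp add: power_mult)
  have "?m * (?m - 1) div 2 = 2 * (k * (?m - 1))" using k by (rule div4)
  then have e2: "(-1::real) ^ (?m * (?m - 1) div 2) = 1" by (simp add: power_mult)
  have "inner (cp Jm zs ?l x) y = (-1) ^ ?m * inner x (cp Jm zs (rev ?l) y)"
    using cp_adj[OF cm] by simp
  also have "cp Jm zs (rev ?l) y = ((-1) ^ (?m * (?m - 1) div 2)) *\<^sub>R cp Jm zs ?l y"
    using cp_rev[OF cm on, of ?l y] by (simp add: subset_eq)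
  finally show ?thesis unfolding K_cp using e1 e2 by simp
qed

lemma K_inv: "clifford_K Jm zs CARD('m) (clifford_K Jm zs CARD('m) y) = y"
proof -
  let ?K = "clifford_K Jm zs CARD('m)"
  have "inner x (?K (?K y)) = inner x y" for x
  proof -
    have "inner x (?K (?K y)) = inner (?K x) (?K y)" by (simp add: K_sym)
    also have "\<dots> = inner x y" unfolding K_cp by (rule cp_isom[OF cm on]) auto
    finally show ?thesis .
  qed
  then have "inner (?K (?K y) - y) (?K (?K y) - y) = 0" by (simp add: inner_diff)
  then show ?thesis by simp
qed

lemma K_anti_basis:
  assumes j: "j < CARD('m)"
  shows "Jm (zs j) (clifford_K Jm zs CARD('m) x) = - clifford_K Jm zs CARD('m) (Jm (zs j) x)"
proof -
  let ?m = "CARD('m)"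
  have ev: "even ?m" using m4 by presburger
  have "Jm (zs j) (cp Jm zs [0..<?m] x) = ((-1) ^ (?m + 1)) *\<^sub>R cp Jm zs [0..<?m] (Jm (zs j) x)"
    using cp_anti[OF cm on j, of "[0..<?m]" x] j by (simp add: subset_eq)
  then show ?thesis unfolding K_cp using ev by simp
qed

lemma K_anti: "Jm z (clifford_K Jm zs CARD('m) x) = - clifford_K Jm zs CARD('m) (Jm z x)"
proof -
  let ?K = "clifford_K Jm zs CARD('m)"
  have l1: "linear (\<lambda>z. Jm z (?K x))" by (rule cm_linz[OF cm])
  have l2: "linear (\<lambda>z. - ?K (Jm z x))"
    by (rule linearI) (simp_all add: cm_addz[OF cm] linear_add[OF K_lin] linear_scale[OF K_lin]
         linear_scale[OF cm_linz[OF cm]])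
  have "Jm z (?K x) = - ?K (Jm z x)"
    by (rule linear_eq_on_span[OF l1 l2, of "zs ` {..<CARD('m)}"])
       (auto simp: K_anti_basis span_zs[OF on])
  then show ?thesis .
qed

end


theorem proposition4p3:
  fixes Jm :: "real^'m \<Rightarrow> real^'a \<Rightarrow> real^'a"
    and Jr :: "real^'r \<Rightarrow> real^'b \<Rightarrow> real^'b"
    and zs :: "nat \<Rightarrow> real^'m"
  assumes "clifford_module Jm"
    and "clifford_module Jr"
    and "CARD('m) mod 4 = 0"
    and "orthonormal_list zs CARD('m)"
  shows
    "clifford_module (\<lambda>(z, w). \<lambda>X. tensor_map (Jm z) id X
                               + tensor_map (clifford_K Jm zs CARD('m)) (Jr w) X)
     \<and> (\<forall>x y u v.
          htype_bracket (\<lambda>(z, w). \<lambda>X. tensor_map (Jm z) id X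
                               + tensor_map (clifford_K Jm zs CARD('m)) (Jr w) X)
             (tensor_vec x u) (tensor_vec y v)
          = (inner u v *\<^sub>R htype_bracket Jm x y,
             inner (clifford_K Jm zs CARD('m) x) y *\<^sub>R htype_bracket Jr u v))"
proof -
  note cm = assms(1) and cr = assms(2) and m4 = assms(3) and on = assms(4)
  define K where "K = clifford_K Jm zs CARD('m)"
  define J' where "J' = (\<lambda>(z, w). \<lambda>X. tensor_map (Jm z) id X + tensor_map K (Jr w) X)"
  have Klin: "linear K" unfolding K_def by (rule K_lin[OF cm m4 on])
  have Ksym: "inner (K x) y = inner x (K y)" for x y unfolding K_def by (rule K_sym[OF cm m4 on])
  have Kinv: "K (K x) = x" for x unfolding K_def by (rule K_inv[OF cm m4 on])
  have Kanti: "Jm z (K x) = - K (Jm z x)" for z x unfolding K_def by (rule K_anti[OF cm m4 on])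
  have J'app: "J' zw X = tensor_map (Jm (fst zw)) id X + tensor_map K (Jr (snd zw)) X" for zw X
    by (cases zw) (simp add: J'_def)
  have lid: "linear (id :: real^'b \<Rightarrow> real^'b)" by (rule linear_id)
  have J'lin: "linear (J' zw)" for zw
    unfolding J'app[abs_def]
    by (rule linearI) (simp_all add: linear_add[OF tm_linear] linear_scale[OF tm_linear] algebra_simps)
  have J'tv: "J' zw (tensor_vec x u) = tensor_vec (Jm (fst zw) x) u + tensor_vec (K x) (Jr (snd zw) u)" for zw x u
    unfolding J'app using tm_tv[OF cm_lin[OF cm] lid] tm_tv[OF Klin cm_lin[OF cr]] by simp
  have fz: "Jm (a + b) = (\<lambda>x. Jm a x + Jm b x)" for a b by (rule ext) (rule cm_addz[OF cm])
  have fw: "Jr (a + b) = (\<lambda>x. Jr a x + Jr b x)" for a b by (rule ext) (rule cm_addz[OF cr])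
  have sz: "Jm (c *\<^sub>R a) = (\<lambda>x. c *\<^sub>R Jm a x)" for c a by (rule ext) (rule linear_scale[OF cm_linz[OF cm]])
  have sw: "Jr (c *\<^sub>R a) = (\<lambda>x. c *\<^sub>R Jr a x)" for c a by (rule ext) (rule linear_scale[OF cm_linz[OF cr]])
  have A: "linear (\<lambda>zw. J' zw X)" for X
    unfolding J'app
    by (rule linearI) (simp_all add: fz fw sz sw tm_addf tm_addg tm_scalef tm_scaleg algebra_simps)
  have B: "inner (J' zw X) Y = - inner X (J' zw Y)" for zw X Y
  proof (rule skew_axis[OF J'lin])
    fix p q
    show "inner (J' zw (axis p 1)) (axis q 1) = - inner (axis p 1) (J' zw (axis q 1))"
      unfolding axis_tv[of p] axis_tv[of q] J'tv
      by (simp add: inner_add_left inner_add_right tv_inner cm_skew[OF cm] cm_skew[OF cr] Ksym)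
  qed
  have C: "J' zw (J' zw X) = - (inner zw zw) *\<^sub>R X" for zw X
  proof -
    obtain z w where zw: "zw = (z, w)" by (cases zw)
    have "(\<lambda>X. J' zw (J' zw X)) = (\<lambda>X. - (inner zw zw) *\<^sub>R X)"
    proof (rule lin_eq_axis)
      show "linear (\<lambda>X. J' zw (J' zw X))"
        using linear_compose[OF J'lin J'lin] by (simp add: o_def)
      show "linear (\<lambda>X. - (inner zw zw) *\<^sub>R X)" by (rule linearI) (simp_all add: algebra_simps)
    next
      fix p
      show "J' zw (J' zw (axis p 1)) = - (inner zw zw) *\<^sub>R axis p 1"
        unfolding axis_tv[of p] J'tv linear_add[OF J'lin] zw
        by (simp add: cm_sq[OF cm] cm_sq[OF cr] Kanti Kinv tv_scale1 tv_scale2 tv_neg1 tv_neg2 algebra_simps)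
    qed
    then show ?thesis by metis
  qed
  have CM: "clifford_module J'"
    unfolding clifford_module_def using A J'lin B C by blast
  have BR: "htype_bracket J' (tensor_vec x u) (tensor_vec y v)
        = (inner u v *\<^sub>R htype_bracket Jm x y, inner (K x) y *\<^sub>R htype_bracket Jr u v)" for x y u v
    unfolding htype_bracket_def[of J']
  proof (rule the_repr, rule allI)
    fix zw :: "(real^'m) \<times> (real^'r)"
    obtain z w where zw: "zw = (z, w)" by (cases zw)
    show "inner zw (inner u v *\<^sub>R htype_bracket Jm x y, inner (K x) y *\<^sub>R htype_bracket Jr u v)
        = inner (J' zw (tensor_vec x u)) (tensor_vec y v)"
      unfolding zw J'tv
      by (simp add: bracket_char[OF cm] bracket_char[OF cr] inner_add_left tv_inner mult.commute)
  qed
  show ?thesis using CM BR unfolding J'_def K_def by blast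
qed

end
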